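(* Let $\mathbf{S}=(S_n)_{n\in\mathbb{N}}$ be a stationary ergodic information source with finite (totally ordered) alphabet $A$. Then the permutation entropy rate \[ h_m^{*}(\mathbf{S})=\lim_{L\to\infty}\frac{1}{L-1}H_m(R_1^L) \] exists and equals the metric entropy rate $h_m(\mathbf{S})=\lim_{L\to\infty}\frac{1}{L}H_m(S_1^L)$.
   Context: A finite-alphabet information source is a discrete-time stochastic process $\mathbf{S}=(S_n)_{n\in\mathbb{N}}$ with values in a finite totally ordered alphabet $A$; stationarity and ergodicity refer to its sequence-space model $(A^{\mathbb{N}},\mathcal{Z},m,\sigma)$, where $m$ is the induced shift-invariant distribution on output sequences and $\sigma$ the left shift. The rank variables are $R_n=\sum_{i=1}^{n}\delta(S_i\le S_n)$, $n\ge1$, where $\delta(P)=1$ if the proposition $P$ holds and $0$ otherwise; $R_1^L=R_1\cdots R_L$ and $S_1^L=S_1\cdots S_L$. $H_m(Z)=-\sum_z\Pr(z)\log_2\Pr(z)$ is the Shannon entropy of a discrete random variable (or word) $Z$. The quantity $\frac{1}{L-1}H_m(R_1^L)$ is the permutation entropy of order $L\ge 2$, equivalently the entropy of the distribution of order patterns (permutations) of the block $S_1^L$ divided by $L-1$. *)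

theory Defs
  imports "HOL-Probability.Probability"
begin

text \<open>Sequence-space model: a probability measure m on sequences nat => 'a
 (sequence index 0 corresponds to the paper's time 1), S_n x = x n.\<close>

definition seq_space :: "(nat \<Rightarrow> 'a) measure" where
  "seq_space = PiM UNIV (\<lambda>_. count_space UNIV)"

definition lshift :: "(nat \<Rightarrow> 'a) \<Rightarrow> (nat \<Rightarrow> 'a)" where
  "lshift x = (\<lambda>n. x (Suc n))"

definition stationary_source :: "(nat \<Rightarrow> 'a) measure \<Rightarrow> bool" where
  "stationary_source m \<longleftrightarrow> prob_space m \<and> sets m = sets seq_space
     \<and> distr m m lshift = m"

definition ergodic_source :: "(nat \<Rightarrow> 'a) measure \<Rightarrow> bool" where
  "ergodic_source m \<longleftrightarrow> (\<forall>B \<in> sets m. lshift -` B \<inter> space m = B \<longrightarrow>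
      measure m B = 0 \<or> measure m B = 1)"

definition shannon_entropy :: "'b measure \<Rightarrow> ('b \<Rightarrow> 'c) \<Rightarrow> real" where
  "shannon_entropy m Z = - (\<Sum>z \<in> Z ` space m.
      measure m {x \<in> space m. Z x = z} * log 2 (measure m {x \<in> space m. Z x = z}))"

definition block :: "nat \<Rightarrow> (nat \<Rightarrow> 'a) \<Rightarrow> 'a list" where
  "block L x = map x [0..<L]"

text \<open>Rank variable R_{n+1} = #{i <= n. x i <= x n} (0-indexed).\<close>
definition rank_var :: "nat \<Rightarrow> (nat \<Rightarrow> 'a::linorder) \<Rightarrow> nat" where
  "rank_var n x = card {i. i \<le> n \<and> x i \<le> x n}"

definition rank_block :: "nat \<Rightarrow> (nat \<Rightarrow> 'a::linorder) \<Rightarrow> nat list" where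
  "rank_block L x = map (\<lambda>n. rank_var n x) [0..<L]"

end

theory Submission
  imports Defs "HOL-Real_Asymp.Real_Asymp"
begin


lemma log2_le: "0 < (x::real) \<Longrightarrow> log 2 x \<le> (x - 1) / ln 2"
  using ln_le_minus_one[of x] by (simp add: log_def divide_right_mono)

lemma group_sum:
  fixes p :: "'b \<Rightarrow> real"
  assumes "finite S"
  shows "(\<Sum>z\<in>S. p z * h (f z)) = (\<Sum>w\<in>f ` S. (\<Sum>z\<in>{z\<in>S. f z = w}. p z) * h w)"
proof -
  have "(\<Sum>z\<in>S. p z * h (f z)) = (\<Sum>w\<in>f ` S. \<Sum>z\<in>{z\<in>S. f z = w}. p z * h (f z))"
    by (rule sum.image_gen[OF assms])
  also have "\<dots> = (\<Sum>w\<in>f ` S. \<Sum>z\<in>{z\<in>S. f z = w}. p z * h w)"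
    by (intro sum.cong refl) auto
  also have "\<dots> = (\<Sum>w\<in>f ` S. (\<Sum>z\<in>{z\<in>S. f z = w}. p z) * h w)"
    by (simp add: sum_distrib_right)
  finally show ?thesis .
qed

lemma group_le:
  fixes p :: "'b \<Rightarrow> real"
  assumes S: "finite S" and p: "\<And>z. z \<in> S \<Longrightarrow> p z \<ge> 0"
  shows "- (\<Sum>w\<in>f ` S. (\<Sum>z\<in>{z\<in>S. f z = w}. p z) * log 2 (\<Sum>z\<in>{z\<in>S. f z = w}. p z))
        \<le> - (\<Sum>z\<in>S. p z * log 2 (p z))"
proof -
  let ?q = "\<lambda>w. \<Sum>z\<in>{z\<in>S. f z = w}. p z"
  have "(\<Sum>z\<in>S. p z * log 2 (p z)) \<le> (\<Sum>z\<in>S. p z * log 2 (?q (f z)))"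
  proof (rule sum_mono)
    fix z assume z: "z \<in> S"
    have le: "p z \<le> ?q (f z)"
      by (rule member_le_sum) (use z p S in auto)
    show "p z * log 2 (p z) \<le> p z * log 2 (?q (f z))"
    proof (cases "p z = 0")
      case False
      then have "p z > 0" using p z by force
      then show ?thesis using le by (intro mult_left_mono) auto
    qed simp
  qed
  also have "\<dots> = (\<Sum>w\<in>f ` S. ?q w * log 2 (?q w))"
    by (rule group_sum[OF S])
  finally show ?thesis by simp
qed

lemma group_ge:
  fixes p :: "'b \<Rightarrow> real"
  assumes S: "finite S" and p: "\<And>z. z \<in> S \<Longrightarrow> p z \<ge> 0"
    and N: "\<And>w. card {z\<in>S. f z = w} \<le> N" and N0: "N > 0"
  shows "- (\<Sum>z\<in>S. p z * log 2 (p z)) \<le>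
     - (\<Sum>w\<in>f ` S. (\<Sum>z\<in>{z\<in>S. f z = w}. p z) * log 2 (\<Sum>z\<in>{z\<in>S. f z = w}. p z))
     + (\<Sum>z\<in>S. p z) * log 2 N"
proof -
  let ?q = "\<lambda>w. \<Sum>z\<in>{z\<in>S. f z = w}. p z"
  have qnn: "?q w \<ge> 0" for w by (rule sum_nonneg) (use p in auto)
  have key: "p z * log 2 (?q (f z) / N) - p z * log 2 (p z) \<le> (?q (f z) / N - p z) / ln 2"
    if z: "z \<in> S" for z
  proof (cases "p z = 0")
    case True
    then show ?thesis using qnn[of "f z"] N0 by simp
  next
    case False
    then have pz: "p z > 0" using p z by force
    have le: "p z \<le> ?q (f z)"
      by (rule member_le_sum) (use z p S in auto)
    have qpos: "?q (f z) > 0" using le pz by linarith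
    have "p z * log 2 (?q (f z) / N) - p z * log 2 (p z) = p z * log 2 (?q (f z) / N / p z)"
      using pz qpos N0 by (simp add: log_divide log_mult right_diff_distrib algebra_simps)
    also have "\<dots> \<le> p z * ((?q (f z) / N / p z - 1) / ln 2)"
      using pz qpos N0 by (intro mult_left_mono log2_le) auto
    also have "\<dots> = (?q (f z) / N - p z) / ln 2"
      using pz by (simp add: field_simps)
    finally show ?thesis .
  qed
  have B1: "(\<Sum>z\<in>S. p z * log 2 (?q (f z) / N)) - (\<Sum>z\<in>S. p z * log 2 (p z))
      \<le> (\<Sum>z\<in>S. (?q (f z) / N - p z) / ln 2)"
    unfolding sum_subtractf[symmetric] by (rule sum_mono) (rule key)
  have B2: "(\<Sum>z\<in>S. (?q (f z) / N - p z) / ln 2) = (\<Sum>z\<in>S. ?q (f z) / N - p z) / ln 2"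
    by (simp add: sum_divide_distrib)
  have B3: "(\<Sum>z\<in>S. ?q (f z) / N - p z) = (\<Sum>w\<in>f ` S. real (card {z\<in>S. f z = w}) * (?q w / N)) - (\<Sum>z\<in>S. p z)"
    using group_sum[OF S, of "\<lambda>_. 1" "\<lambda>w. ?q w / N" f] by (simp add: sum_subtractf)
  have B4: "(\<Sum>w\<in>f ` S. real (card {z\<in>S. f z = w}) * (?q w / N)) \<le> (\<Sum>w\<in>f ` S. ?q w)"
  proof (rule sum_mono)
    fix w
    have "real (card {z\<in>S. f z = w}) * (?q w / N) \<le> real N * (?q w / N)"
      using N[of w] qnn[of w] N0 by (intro mult_right_mono) auto
    then show "real (card {z\<in>S. f z = w}) * (?q w / N) \<le> ?q w" using N0 by simp
  qed
  have B5: "(\<Sum>w\<in>f ` S. ?q w) = (\<Sum>z\<in>S. p z)"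
    using group_sum[OF S, of p "\<lambda>_. 1" f] by simp
  have "(\<Sum>z\<in>S. ?q (f z) / N - p z) \<le> 0" using B3 B4 B5 by linarith
  then have "(\<Sum>z\<in>S. ?q (f z) / N - p z) / ln 2 \<le> 0" by (simp add: divide_nonpos_pos)
  then have A: "(\<Sum>z\<in>S. p z * log 2 (?q (f z) / N)) - (\<Sum>z\<in>S. p z * log 2 (p z)) \<le> 0"
    using B1 B2 by linarith
  have "(\<Sum>z\<in>S. p z * log 2 (?q (f z) / N)) = (\<Sum>w\<in>f ` S. ?q w * log 2 (?q w / N))"
    by (rule group_sum[OF S])
  also have "\<dots> = (\<Sum>w\<in>f ` S. ?q w * log 2 (?q w)) - (\<Sum>w\<in>f ` S. ?q w) * log 2 N"
  proof -
    have "?q w * log 2 (?q w / N) = ?q w * log 2 (?q w) - ?q w * log 2 N" for w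
    proof (cases "?q w = 0")
      case False
      then have "?q w > 0" using qnn[of w] by linarith
      then show ?thesis using N0 by (simp add: log_divide right_diff_distrib)
    qed simp
    then show ?thesis by (simp add: sum_subtractf sum_distrib_right)
  qed
  also have "(\<Sum>w\<in>f ` S. ?q w) = (\<Sum>z\<in>S. p z)"
    using group_sum[OF S, of p "\<lambda>_. 1" f] by simp
  finally show ?thesis using A by linarith
qed

lemma pair_sub:
  fixes p :: "('b \<times> 'c) \<Rightarrow> real"
  assumes S: "finite S" and p: "\<And>z. z \<in> S \<Longrightarrow> p z \<ge> 0" and p1: "(\<Sum>z\<in>S. p z) = 1"
  shows "- (\<Sum>z\<in>S. p z * log 2 (p z)) \<le>
     - (\<Sum>w\<in>fst ` S. (\<Sum>z\<in>{z\<in>S. fst z = w}. p z) * log 2 (\<Sum>z\<in>{z\<in>S. fst z = w}. p z))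
     - (\<Sum>w\<in>snd ` S. (\<Sum>z\<in>{z\<in>S. snd z = w}. p z) * log 2 (\<Sum>z\<in>{z\<in>S. snd z = w}. p z))"
proof -
  define a where "a = (\<lambda>w. \<Sum>z\<in>{z\<in>S. fst z = w}. p z)"
  define b where "b = (\<lambda>w. \<Sum>z\<in>{z\<in>S. snd z = w}. p z)"
  have ann: "a w \<ge> 0" for w unfolding a_def by (rule sum_nonneg) (use p in auto)
  have bnn: "b w \<ge> 0" for w unfolding b_def by (rule sum_nonneg) (use p in auto)
  have pa: "p z \<le> a (fst z)" if "z \<in> S" for z
    unfolding a_def by (rule member_le_sum) (use that p S in auto)
  have pb: "p z \<le> b (snd z)" if "z \<in> S" for z
    unfolding b_def by (rule member_le_sum) (use that p S in auto)
  have key: "p z * log 2 (a (fst z)) + p z * log 2 (b (snd z)) - p z * log 2 (p z)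
      \<le> (a (fst z) * b (snd z) - p z) / ln 2" if z: "z \<in> S" for z
  proof (cases "p z = 0")
    case True
    then show ?thesis using ann bnn by simp
  next
    case False
    then have pz: "p z > 0" using p[OF z] by linarith
    have apos: "a (fst z) > 0" using pa[OF z] pz by linarith
    have bpos: "b (snd z) > 0" using pb[OF z] pz by linarith
    have "p z * log 2 (a (fst z)) + p z * log 2 (b (snd z)) - p z * log 2 (p z)
        = p z * log 2 (a (fst z) * b (snd z) / p z)"
      using pz apos bpos by (simp add: log_divide log_mult algebra_simps)
    also have "\<dots> \<le> p z * ((a (fst z) * b (snd z) / p z - 1) / ln 2)"
      using pz apos bpos by (intro mult_left_mono log2_le) auto
    also have "\<dots> = (a (fst z) * b (snd z) - p z) / ln 2"
      using pz by (simp add: field_simps)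
    finally show ?thesis .
  qed
  have B1: "(\<Sum>z\<in>S. p z * log 2 (a (fst z)) + p z * log 2 (b (snd z)) - p z * log 2 (p z))
     \<le> (\<Sum>z\<in>S. (a (fst z) * b (snd z) - p z) / ln 2)"
    by (rule sum_mono) (rule key)
  have B2: "(\<Sum>z\<in>S. (a (fst z) * b (snd z) - p z) / ln 2) = ((\<Sum>z\<in>S. a (fst z) * b (snd z)) - 1) / ln 2"
    using p1 by (simp add: sum_divide_distrib[symmetric] sum_subtractf)
  have "(\<Sum>z\<in>S. a (fst z) * b (snd z)) \<le> (\<Sum>z\<in>fst ` S \<times> snd ` S. a (fst z) * b (snd z))"
    by (rule sum_mono2) (use S ann bnn in \<open>auto intro: mult_nonneg_nonneg simp: image_iff rev_bexI\<close>)
  also have "\<dots> = (\<Sum>x\<in>fst ` S. a x) * (\<Sum>y\<in>snd ` S. b y)"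
    by (simp add: sum_product sum.cartesian_product case_prod_beta)
  also have "(\<Sum>x\<in>fst ` S. a x) = 1"
    using group_sum[OF S, of p "\<lambda>_. 1" fst] p1 by (simp add: a_def)
  also have "(\<Sum>x\<in>snd ` S. b x) = 1"
    using group_sum[OF S, of p "\<lambda>_. 1" snd] p1 by (simp add: b_def)
  finally have "(\<Sum>z\<in>S. a (fst z) * b (snd z)) - 1 \<le> 0" by simp
  then have "((\<Sum>z\<in>S. a (fst z) * b (snd z)) - 1) / ln 2 \<le> 0" by (simp add: divide_nonpos_pos)
  then have C: "(\<Sum>z\<in>S. p z * log 2 (a (fst z))) + (\<Sum>z\<in>S. p z * log 2 (b (snd z))) - (\<Sum>z\<in>S. p z * log 2 (p z)) \<le> 0"
    using B1 B2 by (simp add: sum.distrib sum_subtractf)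
  have Da: "(\<Sum>z\<in>S. p z * log 2 (a (fst z))) = (\<Sum>w\<in>fst ` S. a w * log 2 (a w))"
    unfolding a_def by (rule group_sum[OF S])
  have Db: "(\<Sum>z\<in>S. p z * log 2 (b (snd z))) = (\<Sum>w\<in>snd ` S. b w * log 2 (b w))"
    unfolding b_def by (rule group_sum[OF S])
  show ?thesis using C Da Db unfolding a_def b_def by linarith
qed




definition good :: "'b measure \<Rightarrow> ('b \<Rightarrow> 'c) \<Rightarrow> bool" where
  "good M Z \<longleftrightarrow> finite (Z ` space M) \<and> (\<forall>z. {x\<in>space M. Z x = z} \<in> sets M)"

lemma prob_image:
  assumes P: "prob_space M" and g: "good M Z"
  shows "measure M {x\<in>space M. f (Z x) = w} =
    (\<Sum>z\<in>{z\<in>Z ` space M. f z = w}. measure M {x\<in>space M. Z x = z})"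
proof -
  have fin: "finite {z\<in>Z ` space M. f z = w}" using g unfolding good_def by auto
  have eq: "{x\<in>space M. f (Z x) = w} = (\<Union>z\<in>{z\<in>Z ` space M. f z = w}. {x\<in>space M. Z x = z})"
    by auto
  show ?thesis unfolding eq
    by (rule measure_finite_Union[OF fin])
       (use g P in \<open>auto simp: good_def disjoint_family_on_def prob_space_def finite_measure.emeasure_finite\<close>)
qed

lemma prob_sum1:
  assumes P: "prob_space M" and g: "good M Z"
  shows "(\<Sum>z\<in>Z ` space M. measure M {x\<in>space M. Z x = z}) = 1"
  using prob_image[OF P g, of "\<lambda>_. True" True] prob_space.prob_space[OF P] by simp

lemma ent_cong:
  assumes "\<And>x. x \<in> space M \<Longrightarrow> W x = W' x"
  shows "shannon_entropy M W = shannon_entropy M W'"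
proof -
  have "W ` space M = W' ` space M" using assms by (auto simp: image_iff)
  moreover have "{x\<in>space M. W x = z} = {x\<in>space M. W' x = z}" for z using assms by auto
  ultimately show ?thesis unfolding shannon_entropy_def by simp
qed

lemma ent_comp_le:
  assumes P: "prob_space M" and g: "good M Z"
  shows "shannon_entropy M (\<lambda>x. f (Z x)) \<le> shannon_entropy M Z"
proof -
  have S: "finite (Z ` space M)" using g by (simp add: good_def)
  have im: "(\<lambda>x. f (Z x)) ` space M = f ` (Z ` space M)" by auto
  show ?thesis
    using group_le[OF S, of "\<lambda>z. measure M {x\<in>space M. Z x = z}" f]
    unfolding shannon_entropy_def im prob_image[OF P g] by simp
qed

lemma ent_comp_ge:
  assumes P: "prob_space M" and g: "good M Z"
    and N: "\<And>w. card {z\<in>Z ` space M. f z = w} \<le> N" and N0: "N > 0"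
  shows "shannon_entropy M Z \<le> shannon_entropy M (\<lambda>x. f (Z x)) + log 2 N"
proof -
  have S: "finite (Z ` space M)" using g by (simp add: good_def)
  have im: "(\<lambda>x. f (Z x)) ` space M = f ` (Z ` space M)" by auto
  show ?thesis
    using group_ge[OF S, of "\<lambda>z. measure M {x\<in>space M. Z x = z}" f N, OF _ N N0]
    unfolding shannon_entropy_def im prob_image[OF P g] prob_sum1[OF P g] by simp
qed

lemma ent_pair:
  assumes P: "prob_space M" and g: "good M Z"
  shows "shannon_entropy M Z \<le> shannon_entropy M (\<lambda>x. fst (Z x)) + shannon_entropy M (\<lambda>x. snd (Z x))"
proof -
  have S: "finite (Z ` space M)" using g by (simp add: good_def)
  have im1: "(\<lambda>x. fst (Z x)) ` space M = fst ` (Z ` space M)" by auto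
  have im2: "(\<lambda>x. snd (Z x)) ` space M = snd ` (Z ` space M)" by auto
  show ?thesis
    using pair_sub[OF S, of "\<lambda>z. measure M {x\<in>space M. Z x = z}", OF _ prob_sum1[OF P g]]
    unfolding shannon_entropy_def im1 im2 prob_image[OF P g] by simp
qed

lemma ent_general_ge:
  assumes P: "prob_space M" and g: "good M Z"
    and det: "\<And>x y. x \<in> space M \<Longrightarrow> y \<in> space M \<Longrightarrow> Z x = Z y \<Longrightarrow> W x = W y"
    and N: "\<And>r. card (Z ` {x\<in>space M. W x = r}) \<le> N" and N0: "N > 0"
  shows "shannon_entropy M Z \<le> shannon_entropy M W + log 2 N"
proof -
  define f where "f = (\<lambda>z. W (SOME x. x \<in> space M \<and> Z x = z))"
  have fW: "f (Z x) = W x" if "x \<in> space M" for x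
  proof -
    have "\<exists>y. y \<in> space M \<and> Z y = Z x" using that by blast
    then have "(SOME y. y \<in> space M \<and> Z y = Z x) \<in> space M \<and> Z (SOME y. y \<in> space M \<and> Z y = Z x) = Z x"
      by (rule someI_ex)
    then show ?thesis unfolding f_def using det that by metis
  qed
  have "{z\<in>Z ` space M. f z = w} = Z ` {x\<in>space M. W x = w}" for w
    using fW by auto
  then have "shannon_entropy M Z \<le> shannon_entropy M (\<lambda>x. f (Z x)) + log 2 N"
    using ent_comp_ge[OF P g, of f N] N N0 by simp
  also have "shannon_entropy M (\<lambda>x. f (Z x)) = shannon_entropy M W"
    by (rule ent_cong) (simp add: fW)
  finally show ?thesis .
qed

lemma ent_le_det:
  assumes P: "prob_space M" and g: "good M Z"
    and fW: "\<And>x. x \<in> space M \<Longrightarrow> W x = f (Z x)"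
  shows "shannon_entropy M W \<le> shannon_entropy M Z"
proof -
  have "shannon_entropy M W = shannon_entropy M (\<lambda>x. f (Z x))" by (rule ent_cong) (simp add: fW)
  also have "\<dots> \<le> shannon_entropy M Z" by (rule ent_comp_le[OF P g])
  finally show ?thesis .
qed




lemma space_seq: "space seq_space = UNIV"
  unfolding seq_space_def by (simp add: space_PiM)

lemma block_set_meas:
  "{x::nat \<Rightarrow> 'a. \<forall>i<L. x i = w i} \<in> sets seq_space"
proof -
  have "Measurable.pred seq_space (\<lambda>x::nat\<Rightarrow>'a. \<forall>i<L. x i = w i)"
    unfolding seq_space_def by measurable
  then show ?thesis by (simp add: pred_def space_seq)
qed

definition loc :: "nat \<Rightarrow> ((nat \<Rightarrow> 'a) \<Rightarrow> 'c) \<Rightarrow> bool" where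
  "loc L Z \<longleftrightarrow> (\<forall>x y. (\<forall>i<L. x i = y i) \<longrightarrow> Z x = Z y)"

lemma local_good:
  fixes Z :: "(nat \<Rightarrow> 'a::finite) \<Rightarrow> 'c"
  assumes s: "sets m = sets seq_space" and l: "loc L Z"
  shows "good m Z"
proof -
  have sp: "space m = UNIV" using sets_eq_imp_space_eq[OF s] space_seq by simp
  define E where "E = (\<lambda>w::'a list. (\<lambda>i. w ! i))"
  have ZE: "Z x = Z (E (block L x))" for x
    using l unfolding loc_def E_def block_def by auto
  have fin: "finite {w::'a list. set w \<subseteq> UNIV \<and> length w = L}"
    by (rule finite_lists_length_eq) simp
  have "Z ` space m \<subseteq> (\<lambda>w. Z (E w)) ` {w::'a list. set w \<subseteq> UNIV \<and> length w = L}"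
  proof
    fix z assume "z \<in> Z ` space m"
    then obtain x where "z = Z x" by auto
    then show "z \<in> (\<lambda>w. Z (E w)) ` {w::'a list. set w \<subseteq> UNIV \<and> length w = L}"
      using ZE[of x] by (intro rev_image_eqI[of "block L x"]) (auto simp: block_def)
  qed
  then have f1: "finite (Z ` space m)" using fin finite_surj by blast
  have meas: "{x\<in>space m. Z x = z} \<in> sets m" for z
  proof -
    define W where "W = {w::'a list. set w \<subseteq> UNIV \<and> length w = L \<and> Z (E w) = z}"
    have fW: "finite W" using fin unfolding W_def by (rule rev_finite_subset) auto
    have eq: "{x\<in>space m. Z x = z} = (\<Union>w\<in>W. {x. \<forall>i<L. x i = E w i})"
    proof (intro set_eqI iffI)
      fix x assume "x \<in> {x\<in>space m. Z x = z}"
      then show "x \<in> (\<Union>w\<in>W. {x. \<forall>i<L. x i = E w i})"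
      proof -
        assume x: "x \<in> {x\<in>space m. Z x = z}"
        have "block L x \<in> W" using ZE[of x] x by (simp add: W_def block_def)
        moreover have "\<forall>i<L. x i = E (block L x) i" by (simp add: E_def block_def)
        ultimately show ?thesis by blast
      qed
    next
      fix x assume "x \<in> (\<Union>w\<in>W. {x. \<forall>i<L. x i = E w i})"
      then obtain w where w: "w \<in> W" "\<forall>i<L. x i = E w i" by auto
      then have "Z x = Z (E w)" using l unfolding loc_def by auto
      then show "x \<in> {x\<in>space m. Z x = z}" using w sp by (auto simp: W_def)
    qed
    show ?thesis unfolding eq s
      by (rule sets.finite_UN[OF fW]) (rule block_set_meas)
  qed
  show ?thesis using f1 meas by (simp add: good_def)
qed

lemma lshift_meas: "lshift \<in> measurable seq_space seq_space"
  unfolding lshift_def seq_space_def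
  by (rule measurable_PiM_single') (auto simp: space_PiM)

lemma stat_shift1:
  fixes Z :: "(nat \<Rightarrow> 'a::finite) \<Rightarrow> 'c"
  assumes st: "stationary_source m" and l: "loc L Z"
  shows "measure m {x\<in>space m. Z (lshift x) = z} = measure m {x\<in>space m. Z x = z}"
proof -
  have s: "sets m = sets seq_space" and d: "distr m m lshift = m"
    using st by (auto simp: stationary_source_def)
  have sp: "space m = UNIV" using sets_eq_imp_space_eq[OF s] space_seq by simp
  have lm: "lshift \<in> measurable m m" using lshift_meas measurable_cong_sets[OF s s] by simp
  have A: "{x\<in>space m. Z x = z} \<in> sets m" using local_good[OF s l] by (simp add: good_def)
  have "measure m {x\<in>space m. Z x = z} = measure (distr m m lshift) {x\<in>space m. Z x = z}"
    using d by simp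
  also have "\<dots> = measure m (lshift -` {x\<in>space m. Z x = z} \<inter> space m)"
    by (rule measure_distr[OF lm A])
  also have "lshift -` {x\<in>space m. Z x = z} \<inter> space m = {x\<in>space m. Z (lshift x) = z}"
    using sp by auto
  finally show ?thesis by simp
qed

lemma stat_shift:
  fixes Z :: "(nat \<Rightarrow> 'a::finite) \<Rightarrow> 'c"
  assumes st: "stationary_source m" and l: "loc L Z"
  shows "measure m {x\<in>space m. Z (\<lambda>n. x (n + a)) = z} = measure m {x\<in>space m. Z x = z}"
proof (induction a)
  case 0
  then show ?case by simp
next
  case (Suc a)
  define Z' where "Z' = (\<lambda>y. Z (\<lambda>n. y (n + a)))"
  have l': "loc (L + a) Z'" using l unfolding loc_def Z'_def
    by (metis (no_types, lifting) add_less_cancel_right)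
  have "{x\<in>space m. Z (\<lambda>n. x (n + Suc a)) = z} = {x\<in>space m. Z' (lshift x) = z}"
    by (simp add: Z'_def lshift_def)
  then have "measure m {x\<in>space m. Z (\<lambda>n. x (n + Suc a)) = z} = measure m {x\<in>space m. Z' (lshift x) = z}"
    by simp
  also have "\<dots> = measure m {x\<in>space m. Z' x = z}" by (rule stat_shift1[OF st l'])
  finally show ?case using Suc by (simp add: Z'_def)
qed

lemma ent_shift:
  fixes Z :: "(nat \<Rightarrow> 'a::finite) \<Rightarrow> 'c"
  assumes st: "stationary_source m" and l: "loc L Z"
  shows "shannon_entropy m (\<lambda>x. Z (\<lambda>n. x (n + a))) = shannon_entropy m Z"
proof -
  have s: "sets m = sets seq_space"
    using st by (auto simp: stationary_source_def)
  have sp: "space m = UNIV" using sets_eq_imp_space_eq[OF s] space_seq by simp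
  have "(\<lambda>x. Z (\<lambda>n. x (n + a))) ` space m = Z ` space m"
  proof (intro set_eqI iffI)
    fix z assume "z \<in> Z ` space m"
    then obtain y where "z = Z y" by auto
    then show "z \<in> (\<lambda>x. Z (\<lambda>n. x (n + a))) ` space m" using sp
      by (intro rev_image_eqI[of "\<lambda>k. y (k - a)"]) auto
  qed (use sp in auto)
  then show ?thesis unfolding shannon_entropy_def using stat_shift[OF st l] by simp
qed




lemma fekete_mult:
  fixes a :: "nat \<Rightarrow> real"
  assumes sub: "\<And>m n. a (m + n) \<le> a m + a n"
  shows "a (q * k + r) \<le> real q * a k + a r"
proof (induction q)
  case (Suc q)
  have "a (Suc q * k + r) = a (k + (q * k + r))" by (simp add: algebra_simps)
  also have "\<dots> \<le> a k + a (q * k + r)" by (rule sub)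
  finally show ?case using Suc by (simp add: algebra_simps)
qed simp

lemma fekete:
  fixes a :: "nat \<Rightarrow> real"
  assumes sub: "\<And>m n. a (m + n) \<le> a m + a n" and nn: "\<And>n. a n \<ge> 0"
  shows "convergent (\<lambda>n. a n / real n)"
proof -
  define l where "l = (INF n\<in>{1..}. a n / real n)"
  have bdd: "bdd_below ((\<lambda>n. a n / real n) ` {1..})"
    by (rule bdd_belowI[of _ 0]) (use nn in auto)
  have lle: "l \<le> a n / real n" if "n \<ge> 1" for n
    unfolding l_def by (rule cInf_lower) (use bdd that in auto)
  have "(\<lambda>n. a n / real n) \<longlonglongrightarrow> l"
  proof (rule LIMSEQ_I)
    fix e :: real assume e: "e > 0"
    have "l < l + e/2" using e by simp
    then obtain k where k: "k \<ge> 1" "a k / real k < l + e/2"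
      unfolding l_def using cInf_lessD[of "(\<lambda>n. a n / real n) ` {1..}"] by fastforce
    define M where "M = Max (a ` {..<k})"
    have aM: "a r \<le> M" if "r < k" for r unfolding M_def using that by (intro Max_ge) auto
    have M0: "M \<ge> 0" using aM[of 0] nn[of 0] k by simp
    obtain n0 :: nat where n0: "n0 > 2 * M / e" using reals_Archimedean2 by blast
    show "\<exists>no. \<forall>n\<ge>no. norm (a n / real n - l) < e"
    proof (intro exI allI impI)
      fix n assume n: "n \<ge> max 1 (n0 + 1)"
      then have npos: "real n > 0" by simp
      have "a n = a ((n div k) * k + n mod k)" by simp
      also have "\<dots> \<le> real (n div k) * a k + a (n mod k)" by (rule fekete_mult[OF sub])
      also have "\<dots> \<le> real (n div k) * a k + M" using aM[of "n mod k"] k by simp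
      also have "real (n div k) * a k \<le> (real n / real k) * a k"
      proof (rule mult_right_mono)
        show "real (n div k) \<le> real n / real k"
          proof -
          have "n div k * k \<le> n" by (rule div_times_less_eq_dividend)
          then have "real (n div k) * real k \<le> real n" by (metis of_nat_le_iff of_nat_mult)
          then show ?thesis using k by (simp add: pos_le_divide_eq)
        qed
      qed (rule nn)
      finally have "a n \<le> real n * (a k / real k) + M" by simp
      then have "a n / real n \<le> a k / real k + M / real n"
        using npos by (simp add: field_simps)
      also have "M / real n < e / 2"
      proof -
        have "real n > 2 * M / e" using n n0 by linarith
        then have "2 * M < e * real n" using e by (simp add: field_simps)
        then show ?thesis using npos by (simp add: field_simps)
      qed
      finally have "a n / real n < l + e" using k by linarith
      moreover have "l \<le> a n / real n" using lle n by simp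
      ultimately show "norm (a n / real n - l) < e" by simp
    qed
  qed
  then show ?thesis by (rule convergentI)
qed

lemma rank_var_eq_card:
  "rank_var n x = Suc (card {i. i < n \<and> x i \<le> x n})"
proof -
  have "{i. i \<le> n \<and> x i \<le> x n} = insert n {i. i < n \<and> x i \<le> x n}" by auto
  then show ?thesis unfolding rank_var_def by simp
qed

lemma rank_cmp:
  fixes x y :: "nat \<Rightarrow> 'a::linorder"
  assumes R: "\<And>n. n < L \<Longrightarrow> rank_var n x = rank_var n y"
  shows "n < L \<Longrightarrow> i < n \<Longrightarrow> (x i \<le> x n \<longleftrightarrow> y i \<le> y n)"
proof (induction n arbitrary: i rule: less_induct)
  case (less n)
  define Dx where "Dx = {i. i < n \<and> x i \<le> x n}"
  define Dy where "Dy = {i. i < n \<and> y i \<le> y n}"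
  have cd: "card Dx = card Dy" using R[OF less.prems(1)] unfolding Dx_def Dy_def rank_var_eq_card by simp
  have fin: "finite Dx" "finite Dy" unfolding Dx_def Dy_def by auto
  have comp: "Dx \<subseteq> Dy \<or> Dy \<subseteq> Dx"
  proof (rule ccontr)
    assume "\<not> ?thesis"
    then obtain i j where i: "i \<in> Dx" "i \<notin> Dy" and j: "j \<in> Dy" "j \<notin> Dx" by auto
    have xi: "i < n" "x i \<le> x n" "\<not> y i \<le> y n" using i unfolding Dx_def Dy_def by auto
    have yj: "j < n" "y j \<le> y n" "\<not> x j \<le> x n" using j unfolding Dx_def Dy_def by auto
    have "i \<noteq> j" using xi yj by auto
    then consider "i < j" | "j < i" by linarith
    then show False
    proof cases
      case 1
      have "x i \<le> x j" using xi yj by simp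
      then have "y i \<le> y j" using less.IH[of j i] 1 yj less.prems by simp
      then show False using xi yj by simp
    next
      case 2
      have "y j \<le> y i" using xi yj by simp
      then have "x j \<le> x i" using less.IH[of i j] 2 xi less.prems by simp
      then show False using xi yj by simp
    qed
  qed
  have "Dx = Dy" using comp cd fin card_subset_eq by metis
  then show ?case using less.prems unfolding Dx_def Dy_def by blast
qed

lemma C_det:
  fixes x y :: "nat \<Rightarrow> 'a::linorder"
  assumes R: "\<And>n. n < L \<Longrightarrow> rank_var n x = rank_var n y"
    and C: "\<And>c. card {j. j < L \<and> x j \<le> c} = card {j. j < L \<and> y j \<le> c}"
    and n: "n < L"
  shows "\<not> x n < y n"
proof
  assume lt: "x n < y n"
  define G where "G = (\<lambda>z::nat\<Rightarrow>'a. {j. j < L \<and> (if j \<le> n then z j \<le> z n else z j < z n)})"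
  have GG: "G x = G y"
  proof -
    have "(if j \<le> n then x j \<le> x n else x j < x n) \<longleftrightarrow> (if j \<le> n then y j \<le> y n else y j < y n)"
      if j: "j < L" for j
    proof (cases "j < n")
      case True then show ?thesis using rank_cmp[OF R n True] by simp
    next
      case False
      show ?thesis
      proof (cases "j = n")
        case False
        then have "n < j" using \<open>\<not> j < n\<close> by simp
        then show ?thesis using rank_cmp[OF R j \<open>n < j\<close>] by (auto simp: not_le)
      qed simp
    qed
    then show ?thesis unfolding G_def
      by (intro set_eqI) (metis (no_types, lifting) mem_Collect_eq)
  qed
  let ?c = "x n"
  have s1: "{j. j < L \<and> y j \<le> ?c} \<subseteq> G y" unfolding G_def using lt by (auto intro: le_less_trans)
  have s2: "G x \<subseteq> {j. j < L \<and> x j \<le> ?c}" unfolding G_def by (auto split: if_splits)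
  have "card (G y) \<le> card {j. j < L \<and> y j \<le> ?c}"
    using card_mono[OF _ s2] GG C[of ?c] by simp
  then have "{j. j < L \<and> y j \<le> ?c} = G y"
    using s1 by (intro card_seteq) (auto simp: G_def)
  moreover have "n \<in> G y" unfolding G_def using n by simp
  moreover have "n \<notin> {j. j < L \<and> y j \<le> ?c}" using lt by (simp add: not_le)
  ultimately show False by blast
qed

lemma block_det:
  fixes x y :: "nat \<Rightarrow> 'a::linorder"
  assumes "rank_block L x = rank_block L y"
    and C: "(\<lambda>c. card {j. j < L \<and> x j \<le> c}) = (\<lambda>c. card {j. j < L \<and> y j \<le> c})"
  shows "block L x = block L y"
proof -
  have R: "rank_var n x = rank_var n y" if "n < L" for n
    using assms(1) that unfolding rank_block_def by (simp add: map_eq_conv)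
  have C': "card {j. j < L \<and> x j \<le> c} = card {j. j < L \<and> y j \<le> c}" for c
    using fun_cong[OF C, of c] by simp
  have "x n = y n" if "n < L" for n
    using C_det[OF R C' that] C_det[OF R[symmetric] C'[symmetric] that] by (simp add: not_less)
  then show ?thesis unfolding block_def by simp
qed




lemma loc_block: "loc L (block L)"
  unfolding loc_def block_def by simp

lemma loc_rank: "loc L (rank_block L)"
proof -
  have "rank_var n x = rank_var n y" if "\<forall>i<L. x i = y i" "n < L" for x y :: "nat \<Rightarrow> 'a" and n
  proof -
    have "{i. i \<le> n \<and> x i \<le> x n} = {i. i \<le> n \<and> y i \<le> y n}" using that by auto
    then show ?thesis unfolding rank_var_def by simp
  qed
  then show ?thesis unfolding loc_def rank_block_def by simp
qed

lemma ent_nonneg: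
  assumes P: "prob_space M" and g: "good M Z"
  shows "shannon_entropy M Z \<ge> 0"
proof -
  have ne: "space M \<noteq> {}" using P by (simp add: prob_space.not_empty)
  have "shannon_entropy M (\<lambda>x. (\<lambda>_. ()) (Z x)) \<le> shannon_entropy M Z" by (rule ent_comp_le[OF P g])
  moreover have "(\<lambda>x. (\<lambda>_. ()) (Z x)) ` space M = {()}" using ne by auto
  moreover have "{x \<in> space M. True} = space M" by simp
  ultimately show ?thesis unfolding shannon_entropy_def
    using prob_space.prob_space[OF P] by simp
qed

lemma block_add: "block (a + b) x = block a x @ block b (\<lambda>n. x (n + a))"
proof -
  have "[0..<a + b] = [0..<a] @ [a..<a + b]" using upt_add_eq_append[of 0 a b] by simp
  moreover have "[a..<a + b] = map (\<lambda>i. i + a) [0..<b]" using map_add_upt[of a b] by (simp add: add.commute)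
  ultimately show ?thesis unfolding block_def by simp
qed

lemma ent_block_sub:
  fixes m :: "(nat \<Rightarrow> 'a::{linorder,finite}) measure"
  assumes st: "stationary_source m"
  shows "shannon_entropy m (block (a + b)) \<le> shannon_entropy m (block a) + shannon_entropy m (block b)"
proof -
  have P: "prob_space m" and s: "sets m = sets seq_space" using st by (auto simp: stationary_source_def)
  define Q where "Q = (\<lambda>x::nat \<Rightarrow> 'a. (block a x, block b (\<lambda>n. x (n + a))))"
  have lQ: "loc (a + b) Q" unfolding loc_def Q_def block_def by auto
  have gQ: "good m Q" by (rule local_good[OF s lQ])
  have "shannon_entropy m (block (a + b)) \<le> shannon_entropy m Q"
    by (rule ent_le_det[OF P gQ, of _ "\<lambda>(u, v). u @ v"]) (simp add: Q_def block_add)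
  also have "\<dots> \<le> shannon_entropy m (\<lambda>x. fst (Q x)) + shannon_entropy m (\<lambda>x. snd (Q x))"
    by (rule ent_pair[OF P gQ])
  also have "shannon_entropy m (\<lambda>x. snd (Q x)) = shannon_entropy m (block b)"
    unfolding Q_def snd_conv by (rule ent_shift[OF st loc_block])
  finally show ?thesis by (simp add: Q_def)
qed

lemma fiber_card:
  fixes T :: "(nat \<Rightarrow> 'a::{linorder,finite}) set"
  assumes T: "T = {x. rank_block L x = r}"
  shows "card (block L ` T) \<le> (L + 1) ^ CARD('a)"
proof -
  define C where "C = (\<lambda>(x::nat \<Rightarrow> 'a) c. card {j. j < L \<and> x j \<le> c})"
  define g where "g = (\<lambda>c. block L (SOME x. x \<in> T \<and> C x = c))"
  have sub: "block L ` T \<subseteq> g ` (C ` T)"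
  proof
    fix w assume "w \<in> block L ` T"
    then obtain x where x: "x \<in> T" "w = block L x" by auto
    have "\<exists>y. y \<in> T \<and> C y = C x" using x by blast
    then have y: "(SOME y. y \<in> T \<and> C y = C x) \<in> T \<and> C (SOME y. y \<in> T \<and> C y = C x) = C x"
      by (rule someI_ex)
    have "block L (SOME y. y \<in> T \<and> C y = C x) = block L x"
      using y x(1) T by (intro block_det) (auto simp: C_def)
    then show "w \<in> g ` (C ` T)" using x unfolding g_def by (intro rev_image_eqI[of "C x"]) auto
  qed
  have CP: "C ` T \<subseteq> PiE UNIV (\<lambda>_. {..L})"
  proof -
    have "card {j. j < L \<and> x j \<le> c} \<le> L" for x :: "nat \<Rightarrow> 'a" and c
    proof -
      have "card {j. j < L \<and> x j \<le> c} \<le> card {..<L}" by (rule card_mono) auto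
      then show ?thesis by simp
    qed
    then have "C x \<in> Pi UNIV (\<lambda>_. {..L})" for x unfolding C_def by (simp add: Pi_iff)
    then show ?thesis unfolding PiE_UNIV_domain by blast
  qed
  have finP: "finite (PiE (UNIV::'a set) (\<lambda>_. {..L}))" by (rule finite_PiE) auto
  have "card (block L ` T) \<le> card (g ` (C ` T))"
    by (rule card_mono[OF _ sub]) (use finite_subset[OF CP finP] in simp)
  also have "\<dots> \<le> card (C ` T)" by (rule card_image_le) (use finite_subset[OF CP finP] in simp)
  also have "\<dots> \<le> card (PiE (UNIV::'a set) (\<lambda>_. {..L}))" by (rule card_mono[OF finP CP])
  also have "\<dots> = (L + 1) ^ CARD('a)" by (simp add: card_PiE)
  finally show ?thesis .
qed

lemma rank_bounds:
  fixes m :: "(nat \<Rightarrow> 'a::{linorder,finite}) measure"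
  assumes st: "stationary_source m"
  shows "shannon_entropy m (rank_block L) \<le> shannon_entropy m (block L)"
    and "shannon_entropy m (block L) \<le> shannon_entropy m (rank_block L) + real CARD('a) * log 2 (real L + 1)"
proof -
  have P: "prob_space m" and s: "sets m = sets seq_space" using st by (auto simp: stationary_source_def)
  have sp: "space m = UNIV" using sets_eq_imp_space_eq[OF s] space_seq by simp
  have gB: "good m (block L)" by (rule local_good[OF s loc_block])
  have det: "rank_block L x = rank_block L y" if "block L x = block L y" for x y :: "nat \<Rightarrow> 'a"
  proof -
    have "\<forall>i<L. x i = y i" using that unfolding block_def by (simp add: map_eq_conv)
    then show ?thesis using loc_rank unfolding loc_def by blast
  qed
  show "shannon_entropy m (rank_block L) \<le> shannon_entropy m (block L)"
  proof (rule ent_le_det[OF P gB, of _ "\<lambda>w. rank_block L (\<lambda>i. w ! i)"])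
    fix x :: "nat \<Rightarrow> 'a"
    have "block L (\<lambda>i. block L x ! i) = block L x" by (simp add: block_def)
    then show "rank_block L x = rank_block L (\<lambda>i. block L x ! i)" using det by metis
  qed
  have "shannon_entropy m (block L) \<le> shannon_entropy m (rank_block L) + log 2 (real ((L + 1) ^ CARD('a)))"
  proof (rule ent_general_ge[OF P gB])
    fix x y :: "nat \<Rightarrow> 'a" assume "block L x = block L y"
    then show "rank_block L x = rank_block L y" by (rule det)
  next
    fix rr
    show "card (block L ` {x \<in> space m. rank_block L x = rr}) \<le> (L + 1) ^ CARD('a)"
      using fiber_card[of "{x. rank_block L x = rr}" L rr] sp by simp
  qed simp
  also have "log 2 (real ((L + 1) ^ CARD('a))) = real CARD('a) * log 2 (real L + 1)"
    by (simp add: log_nat_power add.commute)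
  finally show "shannon_entropy m (block L) \<le> shannon_entropy m (rank_block L) + real CARD('a) * log 2 (real L + 1)" .
qed

theorem theorem1:
  fixes m :: "(nat \<Rightarrow> 'a::{linorder,finite}) measure"
  assumes "stationary_source m" and "ergodic_source m"
  shows "\<exists>h::real.
    (\<lambda>L. shannon_entropy m (rank_block L) / (real L - 1)) \<longlonglongrightarrow> h \<and>
    (\<lambda>L. shannon_entropy m (block L) / real L) \<longlonglongrightarrow> h"
proof -
  note st = assms(1)
  have P: "prob_space m" and s: "sets m = sets seq_space" using st by (auto simp: stationary_source_def)
  define a where "a = (\<lambda>n. shannon_entropy m (block n :: (nat \<Rightarrow> 'a) \<Rightarrow> 'a list))"
  define r where "r = (\<lambda>n. shannon_entropy m (rank_block n :: (nat \<Rightarrow> 'a) \<Rightarrow> nat list))"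
  define K where "K = real CARD('a)"
  have "convergent (\<lambda>n. a n / real n)"
  proof (rule fekete)
    show "a (i + j) \<le> a i + a j" for i j unfolding a_def by (rule ent_block_sub[OF st])
    show "a n \<ge> 0" for n unfolding a_def by (rule ent_nonneg[OF P local_good[OF s loc_block]])
  qed
  then obtain h where h: "(\<lambda>n. a n / real n) \<longlonglongrightarrow> h" by (auto simp: convergent_def)
  have r1: "r n \<le> a n" for n unfolding r_def a_def by (rule rank_bounds(1)[OF st])
  have r2: "a n - K * log 2 (real n + 1) \<le> r n" for n
    using rank_bounds(2)[OF st, of n] unfolding r_def a_def K_def by simp
  have lg: "(\<lambda>n::nat. K * log 2 (real n + 1) / real n) \<longlonglongrightarrow> 0"
  proof -
    have "(\<lambda>n::nat. ln (real n + 1) / real n) \<longlonglongrightarrow> 0" by real_asymp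
    then have "(\<lambda>n::nat. (K / ln 2) * (ln (real n + 1) / real n)) \<longlonglongrightarrow> (K / ln 2) * 0"
      by (rule tendsto_mult_left)
    moreover have "(\<lambda>n::nat. (K / ln 2) * (ln (real n + 1) / real n)) = (\<lambda>n::nat. K * log 2 (real n + 1) / real n)"
      by (simp add: log_def)
    ultimately show ?thesis by simp
  qed
  have low: "(\<lambda>n. a n / real n - K * log 2 (real n + 1) / real n) \<longlonglongrightarrow> h"
    using tendsto_diff[OF h lg] by simp
  have rn: "(\<lambda>n. r n / real n) \<longlonglongrightarrow> h"
  proof (rule tendsto_sandwich[OF _ _ low h])
    show "\<forall>\<^sub>F n in sequentially. a n / real n - K * log 2 (real n + 1) / real n \<le> r n / real n"
      using r2 by (intro always_eventually allI) (simp add: diff_divide_distrib[symmetric] divide_right_mono)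
    show "\<forall>\<^sub>F n in sequentially. r n / real n \<le> a n / real n"
      using r1 by (intro always_eventually allI) (simp add: divide_right_mono)
  qed
  have q: "(\<lambda>n::nat. real n / (real n - 1)) \<longlonglongrightarrow> 1" by real_asymp
  have "(\<lambda>n. r n / real n * (real n / (real n - 1))) \<longlonglongrightarrow> h * 1"
    by (rule tendsto_mult[OF rn q])
  then have lim1: "(\<lambda>n. r n / real n * (real n / (real n - 1))) \<longlonglongrightarrow> h" by simp
  have ev: "\<forall>\<^sub>F n in sequentially. r n / real n * (real n / (real n - 1)) = r n / (real n - 1)"
    using eventually_ge_at_top[of "1::nat"] by eventually_elim auto
  have "(\<lambda>n. r n / (real n - 1)) \<longlonglongrightarrow> h" by (rule Lim_transform_eventually[OF lim1 ev])
  then show ?thesis using h unfolding a_def r_def by blast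
qed


end
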